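(* Assume $\mu<1$. Then for every integer $r\ge1$, $$\mathbf{P}[M=r]\le\frac{p_r}{1-\mu}.$$ In particular $\mathbf{E}[M]<\infty$.
   Context: Let $p=(p_0,p_1,p_2,\dots)$ be a probability distribution on the nonnegative integers with mean $\mu=\sum_k kp_k\in(0,\infty)$, and let $\tau(p)$ be a Galton–Watson tree with offspring distribution $p$: it starts with a single root at generation $0$, and every vertex independently has $k$ children with probability $p_k$. The out-degree of a vertex is its number of children. $M_n$ denotes the maximal out-degree among the vertices of generation $n$ (with $M_n=0$ if generation $n$ is empty), and $M=\sup_{n\ge0}M_n$ is the global maximal out-degree. *)

theory Defs
  imports "HOL-Probability.Probability"
begin

text \<open>Galton--Watson tree via the Ulam--Harris labelling: every potential vertex
  u :: nat list carries an i.i.d. offspring count omega u with law p; the root is [],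
  and the children of a vertex u in the tree are u @ [i] for i < omega u.\<close>

definition gw_space :: "nat pmf \<Rightarrow> (nat list \<Rightarrow> nat) measure" where
  "gw_space p = PiM UNIV (\<lambda>_::nat list. measure_pmf p)"

inductive_set gw_tree :: "(nat list \<Rightarrow> nat) \<Rightarrow> nat list set" for \<omega> where
  root: "[] \<in> gw_tree \<omega>"
| child: "u \<in> gw_tree \<omega> \<Longrightarrow> i < \<omega> u \<Longrightarrow> u @ [i] \<in> gw_tree \<omega>"

definition gw_gen :: "(nat list \<Rightarrow> nat) \<Rightarrow> nat \<Rightarrow> nat list set" where
  "gw_gen \<omega> n = {u \<in> gw_tree \<omega>. length u = n}"

definition gw_Mn :: "(nat list \<Rightarrow> nat) \<Rightarrow> nat \<Rightarrow> nat" where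
  "gw_Mn \<omega> n = (if gw_gen \<omega> n = {} then 0 else Max (\<omega> ` gw_gen \<omega> n))"

definition gw_M :: "(nat list \<Rightarrow> nat) \<Rightarrow> enat" where
  "gw_M \<omega> = (SUP n. enat (gw_Mn \<omega> n))"

definition offspring_mean :: "nat pmf \<Rightarrow> real" where
  "offspring_mean p = (\<Sum>k. real k * pmf p k)"

end

theory Submission imports Defs begin

lemma space_gw: "space (gw_space p) = UNIV"
  by (simp add: gw_space_def space_PiM)

lemma sets_gw: "sets (gw_space p) = sets (PiM UNIV (\<lambda>_::nat list. measure_pmf p))"
  by (simp add: gw_space_def)

lemma prob_gw: "prob_space (gw_space p)"
  unfolding gw_space_def by (intro prob_space_PiM prob_space_measure_pmf)

lemma coord_event:
  fixes J :: "nat list set"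
  assumes "finite J"
  shows "{\<omega>. \<forall>v\<in>J. \<omega> v \<in> A v} \<in> sets (gw_space p)"
    "emeasure (gw_space p) {\<omega>. \<forall>v\<in>J. \<omega> v \<in> A v} = (\<Prod>v\<in>J. emeasure (measure_pmf p) (A v))"
proof -
  have eq: "{\<omega>. \<forall>v\<in>J. \<omega> v \<in> A v} = prod_emb UNIV (\<lambda>_. measure_pmf p) J (PiE J A)"
    by (auto simp: prod_emb_def space_PiM PiE_iff)
  show "{\<omega>. \<forall>v\<in>J. \<omega> v \<in> A v} \<in> sets (gw_space p)"
    unfolding eq gw_space_def using assms
    by (intro measurable_prod_emb sets_PiM_I_finite) auto
  show "emeasure (gw_space p) {\<omega>. \<forall>v\<in>J. \<omega> v \<in> A v} = (\<Prod>v\<in>J. emeasure (measure_pmf p) (A v))"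
    unfolding eq gw_space_def using assms
    by (intro emeasure_PiM_emb prob_space_measure_pmf) auto
qed

lemma tree_iff: "u \<in> gw_tree \<omega> \<longleftrightarrow> (\<forall>j<length u. u!j < \<omega> (take j u))"
proof (induction u rule: rev_induct)
  case Nil
  then show ?case by (simp add: gw_tree.root)
next
  case (snoc i v)
  have "v @ [i] \<in> gw_tree \<omega> \<longleftrightarrow> v \<in> gw_tree \<omega> \<and> i < \<omega> v"
  proof
    assume "v @ [i] \<in> gw_tree \<omega>"
    then show "v \<in> gw_tree \<omega> \<and> i < \<omega> v"
      by (cases rule: gw_tree.cases) auto
  qed (auto intro: gw_tree.child)
  also have "\<dots> \<longleftrightarrow> (\<forall>j<length (v@[i]). (v@[i])!j < \<omega> (take j (v@[i])))"
    using snoc by (auto simp: nth_append less_Suc_eq)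
  finally show ?case .
qed

definition Qt :: "nat pmf \<Rightarrow> nat \<Rightarrow> ennreal" where
  "Qt p i = emeasure (measure_pmf p) {x. i < x}"

lemma tree_event:
  "{\<omega>. u \<in> gw_tree \<omega> \<and> \<omega> u \<in> B} \<in> sets (gw_space p)"
  "emeasure (gw_space p) {\<omega>. u \<in> gw_tree \<omega> \<and> \<omega> u \<in> B}
     = emeasure (measure_pmf p) B * (\<Prod>j<length u. Qt p (u!j))"
proof -
  define J where "J = (\<lambda>j. take j u) ` {..<length u}"
  define A where "A = (\<lambda>v. if v = u then B else {x. u!(length v) < x})"
  have tk: "take j u \<noteq> u" "length (take j u) = j" if "j < length u" for j
  proof -
    show "length (take j u) = j" using that by simp
    then show "take j u \<noteq> u" using that by (metis less_irrefl)
  qed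
  have uJ: "u \<notin> J"
  proof
    assume "u \<in> J"
    then obtain j where j: "j < length u" "u = take j u" unfolding J_def by auto
    then show False using tk(1)[OF j(1)] by simp
  qed
  have fin: "finite (insert u J)" unfolding J_def by simp
  have eq1: "(\<forall>v\<in>insert u J. \<omega> v \<in> A v) \<longleftrightarrow> \<omega> u \<in> B \<and> (\<forall>j<length u. u!j < \<omega> (take j u))" for \<omega>
  proof -
    have "(\<forall>v\<in>J. \<omega> v \<in> A v) \<longleftrightarrow> (\<forall>j<length u. \<omega> (take j u) \<in> A (take j u))"
      unfolding J_def by blast
    also have "\<dots> \<longleftrightarrow> (\<forall>j<length u. u!j < \<omega> (take j u))"
      unfolding A_def using tk by simp
    finally show ?thesis unfolding A_def by simp
  qed
  have eq: "{\<omega>. u \<in> gw_tree \<omega> \<and> \<omega> u \<in> B} = {\<omega>. \<forall>v\<in>insert u J. \<omega> v \<in> A v}"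
    unfolding eq1 tree_iff by blast
  show "{\<omega>. u \<in> gw_tree \<omega> \<and> \<omega> u \<in> B} \<in> sets (gw_space p)"
    unfolding eq by (rule coord_event(1)[OF fin])
  have inj: "inj_on (\<lambda>j. take j u) {..<length u}"
  proof (rule inj_onI)
    fix i j assume "i \<in> {..<length u}" "j \<in> {..<length u}" "take i u = take j u"
    then show "i = j" using tk(2)[of i] tk(2)[of j] by (metis lessThan_iff)
  qed
  have "emeasure (gw_space p) {\<omega>. u \<in> gw_tree \<omega> \<and> \<omega> u \<in> B}
      = (\<Prod>v\<in>insert u J. emeasure (measure_pmf p) (A v))"
    unfolding eq by (rule coord_event(2)[OF fin])
  also have "\<dots> = emeasure (measure_pmf p) B * (\<Prod>v\<in>J. emeasure (measure_pmf p) (A v))"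
    using fin uJ by (simp add: A_def)
  also have "(\<Prod>v\<in>J. emeasure (measure_pmf p) (A v)) = (\<Prod>j<length u. Qt p (u!j))"
    unfolding J_def prod.reindex[OF inj] o_def
  proof (rule prod.cong)
    fix j assume "j \<in> {..<length u}"
    then show "emeasure (measure_pmf p) (A (take j u)) = Qt p (u!j)"
      using tk[of j] unfolding A_def Qt_def by simp
  qed simp
  finally show "emeasure (gw_space p) {\<omega>. u \<in> gw_tree \<omega> \<and> \<omega> u \<in> B}
     = emeasure (measure_pmf p) B * (\<Prod>j<length u. Qt p (u!j))" .
qed

lemma Qt_sum:
  assumes "summable (\<lambda>k. real k * pmf p k)"
  shows "(\<integral>\<^sup>+i. Qt p i \<partial>count_space UNIV) = ennreal (offspring_mean p)"
proof -
  have "Qt p i = (\<integral>\<^sup>+k. ennreal (pmf p k) * indicator {x. i < x} k \<partial>count_space UNIV)" for i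
    unfolding Qt_def by (simp add: nn_integral_indicator[symmetric] nn_integral_measure_pmf)
  then have "(\<integral>\<^sup>+i. Qt p i \<partial>count_space UNIV)
      = (\<integral>\<^sup>+i. \<integral>\<^sup>+k. ennreal (pmf p k) * indicator {x. i < x} k \<partial>count_space UNIV \<partial>count_space UNIV)"
    by simp
  also have "\<dots> = (\<integral>\<^sup>+k. \<integral>\<^sup>+i. ennreal (pmf p k) * indicator {x. i < x} k \<partial>count_space UNIV \<partial>count_space UNIV)"
    by (rule nn_integral_count_space_nn_integral[symmetric]) auto
  also have "\<dots> = (\<integral>\<^sup>+k. ennreal (real k * pmf p k) \<partial>count_space UNIV)"
  proof (rule nn_integral_cong)
    fix k :: nat
    have "(\<integral>\<^sup>+i. ennreal (pmf p k) * indicator {x. i < x} k \<partial>count_space UNIV)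
        = (\<integral>\<^sup>+i. ennreal (pmf p k) * indicator {..<k} i \<partial>count_space UNIV)"
      by (intro nn_integral_cong) (auto simp: indicator_def)
    also have "\<dots> = ennreal (pmf p k) * emeasure (count_space UNIV) {..<k}"
      by (simp add: nn_integral_cmult)
    also have "\<dots> = ennreal (real k * pmf p k)"
      by (simp add: ennreal_mult' mult.commute ennreal_of_nat_eq_real_of_nat)
    finally show "(\<integral>\<^sup>+i. ennreal (pmf p k) * indicator {x. i < x} k \<partial>count_space UNIV) = ennreal (real k * pmf p k)" .
  qed
  also have "\<dots> = ennreal (offspring_mean p)"
    unfolding nn_integral_count_space_nat offspring_mean_def
    by (rule suminf_ennreal2) (auto simp: assms)
  finally show ?thesis .
qed

lemma list_split:
  fixes g :: "nat list \<Rightarrow> ennreal"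
  shows "(\<integral>\<^sup>+u. g u \<partial>count_space UNIV) = g [] + (\<integral>\<^sup>+v. \<integral>\<^sup>+i. g (v @ [i]) \<partial>count_space UNIV \<partial>count_space UNIV)"
proof -
  have bij: "bij_betw (\<lambda>x. fst x @ [snd x]) (UNIV :: (nat list \<times> nat) set) {u. u \<noteq> []}"
    by (rule bij_betw_byWitness[where f'="\<lambda>u. (butlast u, last u)"]) auto
  have "(\<integral>\<^sup>+v. \<integral>\<^sup>+i. g (v @ [i]) \<partial>count_space UNIV \<partial>count_space UNIV)
      = (\<integral>\<^sup>+x. g (fst x @ [snd x]) \<partial>count_space (UNIV \<times> UNIV))"
  proof -
    have "(\<integral>\<^sup>+v. \<integral>\<^sup>+i. g (v @ [i]) \<partial>count_space UNIV \<partial>count_space UNIV)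
       = (\<integral>\<^sup>+v. \<integral>\<^sup>+i. (\<lambda>x. g (fst x @ [snd x])) (v, i) \<partial>count_space UNIV \<partial>count_space UNIV)" by simp
    also have "\<dots> = integral\<^sup>N (count_space UNIV \<Otimes>\<^sub>M count_space UNIV) (\<lambda>x. g (fst x @ [snd x]))"
      by (rule sigma_finite_measure.nn_integral_fst)
         (simp_all add: sigma_finite_measure_count_space_countable pair_measure_countable)
    also have "\<dots> = (\<integral>\<^sup>+x. g (fst x @ [snd x]) \<partial>count_space (UNIV \<times> UNIV))"
      by (simp add: pair_measure_countable)
    finally show ?thesis .
  qed
  also have "\<dots> = (\<integral>\<^sup>+u. g u \<partial>count_space {u. u \<noteq> []})"
    using nn_integral_bij_count_space[OF bij, of g] by simp
  also have "\<dots> = (\<integral>\<^sup>+u. g u * indicator {u. u \<noteq> []} u \<partial>count_space UNIV)"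
    by (rule nn_integral_count_space_indicator) simp
  finally have 1: "(\<integral>\<^sup>+v. \<integral>\<^sup>+i. g (v @ [i]) \<partial>count_space UNIV \<partial>count_space UNIV)
      = (\<integral>\<^sup>+u. g u * indicator {u. u \<noteq> []} u \<partial>count_space UNIV)" .
  have 2: "(\<integral>\<^sup>+u. g u * indicator {[]} u \<partial>count_space UNIV) = g []"
    by (subst nn_integral_indicator_finite) auto
  have "(\<integral>\<^sup>+u. g u \<partial>count_space UNIV)
      = (\<integral>\<^sup>+u. g u * indicator {[]} u + g u * indicator {u. u \<noteq> []} u \<partial>count_space UNIV)"
    by (intro nn_integral_cong) (auto simp: indicator_def)
  also have "\<dots> = (\<integral>\<^sup>+u. g u * indicator {[]} u \<partial>count_space UNIV) + (\<integral>\<^sup>+u. g u * indicator {u. u \<noteq> []} u \<partial>count_space UNIV)"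
    by (rule nn_integral_add) auto
  finally show ?thesis using 1 2 by simp
qed

definition Fq :: "nat pmf \<Rightarrow> nat list \<Rightarrow> ennreal" where
  "Fq p u = (\<Prod>j<length u. Qt p (u!j))"

lemma Fq_snoc: "Fq p (v @ [i]) = Fq p v * Qt p i"
proof -
  have "Fq p (v @ [i]) = (\<Prod>j<length v. Qt p ((v@[i])!j)) * Qt p i"
    unfolding Fq_def by (simp add: prod.lessThan_Suc nth_append)
  also have "(\<Prod>j<length v. Qt p ((v@[i])!j)) = Fq p v"
    unfolding Fq_def by (rule prod.cong) (auto simp: nth_append)
  finally show ?thesis .
qed

lemma gen_sum:
  assumes "summable (\<lambda>k. real k * pmf p k)"
  shows "(\<integral>\<^sup>+u. indicator {u. length u = n} u * Fq p u \<partial>count_space UNIV) = ennreal (offspring_mean p) ^ n"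
proof (induction n)
  case 0
  show ?case
    by (subst list_split) (simp add: Fq_def)
next
  case (Suc n)
  have "(\<integral>\<^sup>+u. indicator {u. length u = Suc n} u * Fq p u \<partial>count_space UNIV)
      = (\<integral>\<^sup>+v. \<integral>\<^sup>+i. (indicator {u. length u = n} v * Fq p v) * Qt p i \<partial>count_space UNIV \<partial>count_space UNIV)"
    by (subst list_split) (auto simp: Fq_snoc indicator_def mult.assoc intro!: nn_integral_cong)
  also have "\<dots> = (\<integral>\<^sup>+v. (indicator {u. length u = n} v * Fq p v) * ennreal (offspring_mean p) \<partial>count_space UNIV)"
    by (simp add: nn_integral_cmult Qt_sum[OF assms])
  also have "\<dots> = ennreal (offspring_mean p) ^ n * ennreal (offspring_mean p)"
    by (simp add: nn_integral_multc Suc)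
  finally show ?case by (simp add: mult.commute)
qed

lemma total_sum:
  assumes "summable (\<lambda>k. real k * pmf p k)" "0 \<le> offspring_mean p" "offspring_mean p < 1"
  shows "(\<integral>\<^sup>+u. Fq p u \<partial>count_space UNIV) = ennreal (1 / (1 - offspring_mean p))"
proof -
  let ?m = "offspring_mean p"
  have "(\<integral>\<^sup>+u. Fq p u \<partial>count_space UNIV) = (\<integral>\<^sup>+u. (\<Sum>n. indicator {u. length u = n} u * Fq p u) \<partial>count_space UNIV)"
  proof (rule nn_integral_cong)
    fix u :: "nat list"
    have "(\<Sum>n. indicator {u. length u = n} u * Fq p u) = (\<Sum>n\<in>{length u}. indicator {u. length u = n} u * Fq p u)"
      by (rule suminf_finite) auto
    then show "Fq p u = (\<Sum>n. indicator {u. length u = n} u * Fq p u)" by simp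
  qed
  also have "\<dots> = (\<Sum>n. \<integral>\<^sup>+u. indicator {u. length u = n} u * Fq p u \<partial>count_space UNIV)"
    by (rule nn_integral_suminf) auto
  also have "\<dots> = (\<Sum>n. ennreal (?m ^ n))"
    by (simp add: gen_sum[OF assms(1)] ennreal_power assms(2))
  also have "\<dots> = ennreal (\<Sum>n. ?m ^ n)"
    by (rule suminf_ennreal2) (auto simp: assms summable_geometric)
  also have "(\<Sum>n. ?m ^ n) = 1 / (1 - ?m)"
    by (rule suminf_geometric) (use assms in auto)
  finally show ?thesis .
qed

lemma gen_finite: "finite (gw_gen \<omega> n)"
proof (induction n)
  case 0
  have "gw_gen \<omega> 0 \<subseteq> {[]}" by (auto simp: gw_gen_def)
  then show ?case by (rule finite_subset) simp
next
  case (Suc n)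
  have "gw_gen \<omega> (Suc n) \<subseteq> (\<Union>v\<in>gw_gen \<omega> n. (\<lambda>i. v @ [i]) ` {..<\<omega> v})"
  proof
    fix u assume "u \<in> gw_gen \<omega> (Suc n)"
    then have u: "u \<in> gw_tree \<omega>" "length u = Suc n" by (auto simp: gw_gen_def)
    from u(1) show "u \<in> (\<Union>v\<in>gw_gen \<omega> n. (\<lambda>i. v @ [i]) ` {..<\<omega> v})"
    proof (cases rule: gw_tree.cases)
      case root then show ?thesis using u(2) by simp
    next
      case (child v i)
      then show ?thesis using u(2) by (auto simp: gw_gen_def)
    qed
  qed
  then show ?case by (rule finite_subset) (use Suc in auto)
qed

lemma M_attained:
  assumes "gw_M \<omega> = enat r" "1 \<le> r"
  shows "\<exists>u\<in>gw_tree \<omega>. \<omega> u = r"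
proof -
  let ?A = "range (\<lambda>n. enat (gw_Mn \<omega> n))"
  have "Sup ?A = enat r" using assms(1) unfolding gw_M_def .
  then have fin: "finite ?A" unfolding Sup_enat_def by (auto split: if_splits)
  then have "Sup ?A = Max ?A" unfolding Sup_enat_def by auto
  moreover have "Max ?A \<in> ?A" using fin by (intro Max_in) auto
  ultimately obtain n where n: "enat (gw_Mn \<omega> n) = enat r" using \<open>Sup ?A = enat r\<close> by auto
  then have Mn: "gw_Mn \<omega> n = r" by simp
  then have ne: "gw_gen \<omega> n \<noteq> {}" using assms(2) unfolding gw_Mn_def by (auto split: if_splits)
  then have "Max (\<omega> ` gw_gen \<omega> n) = r" using Mn unfolding gw_Mn_def by simp
  moreover have "Max (\<omega> ` gw_gen \<omega> n) \<in> \<omega> ` gw_gen \<omega> n"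
    using ne gen_finite by (intro Max_in) auto
  ultimately show ?thesis by (auto simp: gw_gen_def)
qed

lemma Mn_le: "(of_nat (gw_Mn \<omega> n) :: ennreal)
   \<le> (\<integral>\<^sup>+u. indicator (gw_tree \<omega>) u * (of_nat (\<omega> u) :: ennreal) \<partial>count_space UNIV)"
proof (cases "gw_gen \<omega> n = {}")
  case True then show ?thesis by (simp add: gw_Mn_def)
next
  case False
  have "Max (\<omega> ` gw_gen \<omega> n) \<in> \<omega> ` gw_gen \<omega> n"
    using False gen_finite by (intro Max_in) auto
  then obtain u where u0: "u \<in> gw_gen \<omega> n" "Max (\<omega> ` gw_gen \<omega> n) = \<omega> u"
    by auto
  then have u: "u \<in> gw_tree \<omega>" "gw_Mn \<omega> n = \<omega> u"
    using False unfolding gw_Mn_def by (auto simp: gw_gen_def)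
  have "(of_nat (gw_Mn \<omega> n) :: ennreal) = indicator (gw_tree \<omega>) u * (of_nat (\<omega> u) :: ennreal)"
    using u by simp
  also have "\<dots> \<le> (\<integral>\<^sup>+u. indicator (gw_tree \<omega>) u * (of_nat (\<omega> u) :: ennreal) \<partial>count_space UNIV)"
    by (rule nn_integral_ge_point) simp
  finally show ?thesis .
qed

lemma M_le: "ennreal_of_enat (gw_M \<omega>)
   \<le> (\<integral>\<^sup>+u. indicator (gw_tree \<omega>) u * (of_nat (\<omega> u) :: ennreal) \<partial>count_space UNIV)"
  unfolding gw_M_def ennreal_of_enat_Sup
  by (rule SUP_least) (auto simp: Mn_le)

lemma mean_int:
  assumes "summable (\<lambda>k. real k * pmf p k)"
  shows "(\<integral>\<^sup>+k. of_nat k * ennreal (pmf p k) \<partial>count_space UNIV) = ennreal (offspring_mean p)"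
proof -
  have "(\<integral>\<^sup>+k. of_nat k * ennreal (pmf p k) \<partial>count_space UNIV) = (\<integral>\<^sup>+k. ennreal (real k * pmf p k) \<partial>count_space UNIV)"
    by (intro nn_integral_cong) (simp add: ennreal_mult' ennreal_of_nat_eq_real_of_nat)
  also have "\<dots> = ennreal (offspring_mean p)"
    unfolding nn_integral_count_space_nat offspring_mean_def
    by (rule suminf_ennreal2) (auto simp: assms)
  finally show ?thesis .
qed

lemma tree_meas: "{\<omega>. u \<in> gw_tree \<omega>} \<in> sets (gw_space p)"
  using tree_event(1)[where u=u and B=UNIV and p=p] by simp

lemma tree_r_meas: "{\<omega>. u \<in> gw_tree \<omega> \<and> \<omega> u = r} \<in> sets (gw_space p)"
  using tree_event(1)[where u=u and B="{r}" and p=p] by simp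

lemma tree_r_emeasure: "emeasure (gw_space p) {\<omega>. u \<in> gw_tree \<omega> \<and> \<omega> u = r} = ennreal (pmf p r) * Fq p u"
  using tree_event(2)[where u=u and B="{r}" and p=p] by (simp add: emeasure_pmf_single Fq_def)

lemma E_count:
  assumes "summable (\<lambda>k. real k * pmf p k)" "0 \<le> offspring_mean p" "offspring_mean p < 1"
  shows "(\<integral>\<^sup>+\<omega>. (\<integral>\<^sup>+u. indicator {\<omega>. u \<in> gw_tree \<omega> \<and> \<omega> u \<in> {r}} \<omega> \<partial>count_space UNIV) \<partial>gw_space p)
    = ennreal (pmf p r) * ennreal (1 / (1 - offspring_mean p))"
proof -
  have "(\<integral>\<^sup>+\<omega>. (\<integral>\<^sup>+u. indicator {\<omega>. u \<in> gw_tree \<omega> \<and> \<omega> u \<in> {r}} \<omega> \<partial>count_space UNIV) \<partial>gw_space p)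
     = (\<integral>\<^sup>+u. (\<integral>\<^sup>+\<omega>. indicator {\<omega>. u \<in> gw_tree \<omega> \<and> \<omega> u \<in> {r}} \<omega> \<partial>gw_space p) \<partial>count_space UNIV)"
    by (rule nn_integral_count_space_nn_integral) (auto intro: borel_measurable_indicator tree_r_meas)
  also have "\<dots> = (\<integral>\<^sup>+u. ennreal (pmf p r) * Fq p u \<partial>count_space UNIV)"
    by (intro nn_integral_cong)
       (simp add: nn_integral_indicator tree_r_meas tree_r_emeasure)
  also have "\<dots> = ennreal (pmf p r) * ennreal (1 / (1 - offspring_mean p))"
    by (simp add: nn_integral_cmult total_sum[OF assms])
  finally show ?thesis .
qed

lemma coord_meas: "(\<lambda>\<omega>. of_nat (\<omega> u) :: ennreal) \<in> borel_measurable (gw_space p)"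
proof -
  have "(\<lambda>\<omega>. \<omega> u) \<in> measurable (gw_space p) (measure_pmf p)"
    unfolding gw_space_def by (rule measurable_component_singleton) simp
  moreover have "(of_nat :: nat \<Rightarrow> ennreal) \<in> borel_measurable (measure_pmf p)"
    by simp
  ultimately show ?thesis by (rule measurable_compose)
qed

lemma E_D:
  assumes "summable (\<lambda>k. real k * pmf p k)" "0 \<le> offspring_mean p" "offspring_mean p < 1"
  shows "(\<integral>\<^sup>+\<omega>. (\<integral>\<^sup>+u. indicator (gw_tree \<omega>) u * (of_nat (\<omega> u) :: ennreal) \<partial>count_space UNIV) \<partial>gw_space p)
    = ennreal (offspring_mean p) * ennreal (1 / (1 - offspring_mean p))"
proof -
  let ?E = "\<lambda>u r. {\<omega>. u \<in> gw_tree \<omega> \<and> \<omega> u \<in> {r}}"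
  have ind: "indicator (gw_tree \<omega>) u = indicator {\<omega>. u \<in> gw_tree \<omega> \<and> \<omega> u \<in> UNIV} \<omega>" for \<omega> u
    by (simp add: indicator_def)
  have pt: "indicator (gw_tree \<omega>) u * (of_nat (\<omega> u) :: ennreal)
      = (\<integral>\<^sup>+r. of_nat r * indicator (?E u r) \<omega> \<partial>count_space UNIV)" for \<omega> u
  proof -
    have "(\<integral>\<^sup>+r. of_nat r * indicator (?E u r) \<omega> \<partial>count_space UNIV)
        = (\<integral>\<^sup>+r. (indicator (gw_tree \<omega>) u * (of_nat (\<omega> u) :: ennreal)) * indicator {\<omega> u} r \<partial>count_space UNIV)"
      by (intro nn_integral_cong) (auto simp: indicator_def)
    also have "\<dots> = indicator (gw_tree \<omega>) u * (of_nat (\<omega> u) :: ennreal)"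
      by (subst nn_integral_cmult_indicator) auto
    finally show ?thesis by simp
  qed
  have "(\<integral>\<^sup>+\<omega>. (\<integral>\<^sup>+u. indicator (gw_tree \<omega>) u * (of_nat (\<omega> u) :: ennreal) \<partial>count_space UNIV) \<partial>gw_space p)
     = (\<integral>\<^sup>+u. (\<integral>\<^sup>+\<omega>. indicator (gw_tree \<omega>) u * (of_nat (\<omega> u) :: ennreal) \<partial>gw_space p) \<partial>count_space UNIV)"
  proof (rule nn_integral_count_space_nn_integral)
    fix u :: "nat list"
    have "(\<lambda>\<omega>. indicator {\<omega>. u \<in> gw_tree \<omega>} \<omega> * (of_nat (\<omega> u) :: ennreal)) \<in> borel_measurable (gw_space p)"
      by (intro borel_measurable_times_ennreal borel_measurable_indicator tree_meas coord_meas)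
    then show "(\<lambda>\<omega>. indicator (gw_tree \<omega>) u * (of_nat (\<omega> u) :: ennreal)) \<in> borel_measurable (gw_space p)"
      by (simp add: indicator_def)
  qed simp
  also have "\<dots> = (\<integral>\<^sup>+u. Fq p u * ennreal (offspring_mean p) \<partial>count_space UNIV)"
  proof (rule nn_integral_cong)
    fix u :: "nat list"
    have "(\<integral>\<^sup>+\<omega>. indicator (gw_tree \<omega>) u * (of_nat (\<omega> u) :: ennreal) \<partial>gw_space p)
       = (\<integral>\<^sup>+\<omega>. \<integral>\<^sup>+r. of_nat r * indicator (?E u r) \<omega> \<partial>count_space UNIV \<partial>gw_space p)"
      by (simp add: pt)
    also have "\<dots> = (\<integral>\<^sup>+r. \<integral>\<^sup>+\<omega>. of_nat r * indicator (?E u r) \<omega> \<partial>gw_space p \<partial>count_space UNIV)"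
      by (rule nn_integral_count_space_nn_integral)
         (auto intro!: borel_measurable_times_ennreal borel_measurable_indicator tree_r_meas)
    also have "\<dots> = (\<integral>\<^sup>+r. (of_nat r * ennreal (pmf p r)) * Fq p u \<partial>count_space UNIV)"
      by (intro nn_integral_cong)
         (simp add: nn_integral_cmult_indicator tree_r_meas tree_r_emeasure mult.assoc)
    also have "\<dots> = Fq p u * ennreal (offspring_mean p)"
      by (subst nn_integral_multc) (simp_all add: mean_int[OF assms(1)] mult.commute)
    finally show "(\<integral>\<^sup>+\<omega>. indicator (gw_tree \<omega>) u * (of_nat (\<omega> u) :: ennreal) \<partial>gw_space p)
       = Fq p u * ennreal (offspring_mean p)" .
  qed
  also have "\<dots> = ennreal (offspring_mean p) * ennreal (1 / (1 - offspring_mean p))"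
    by (subst nn_integral_multc) (simp_all add: total_sum[OF assms] mult.commute)
  finally show ?thesis .
qed

theorem mainTheorem7:
  fixes p :: "nat pmf"
  assumes "summable (\<lambda>k. real k * pmf p k)"
    and "0 < offspring_mean p"
    and "offspring_mean p < 1"
  shows "(\<forall>r::nat. r \<ge> 1 \<longrightarrow>
           measure (gw_space p) {\<omega> \<in> space (gw_space p). gw_M \<omega> = enat r}
             \<le> pmf p r / (1 - offspring_mean p))
         \<and> (\<integral>\<^sup>+ \<omega>. ennreal_of_enat (gw_M \<omega>) \<partial>gw_space p) < \<infinity>"
proof (intro conjI allI impI)
  have as: "summable (\<lambda>k. real k * pmf p k)" "0 \<le> offspring_mean p" "offspring_mean p < 1"
    using assms by auto
  fix r :: nat assume r: "1 \<le> r"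
  let ?S = "{\<omega> \<in> space (gw_space p). gw_M \<omega> = enat r}"
  have nn: "0 \<le> pmf p r / (1 - offspring_mean p)" using assms by simp
  show "measure (gw_space p) ?S \<le> pmf p r / (1 - offspring_mean p)"
  proof (cases "?S \<in> sets (gw_space p)")
    case False
    then show ?thesis using nn by (simp add: measure_notin_sets)
  next
    case True
    have "emeasure (gw_space p) ?S = (\<integral>\<^sup>+\<omega>. indicator ?S \<omega> \<partial>gw_space p)"
      using True by simp
    also have "\<dots> \<le> (\<integral>\<^sup>+\<omega>. (\<integral>\<^sup>+u. indicator {\<omega>. u \<in> gw_tree \<omega> \<and> \<omega> u \<in> {r}} \<omega> \<partial>count_space UNIV) \<partial>gw_space p)"
    proof (rule nn_integral_mono)
      fix \<omega> assume "\<omega> \<in> space (gw_space p)"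
      show "indicator ?S \<omega> \<le> (\<integral>\<^sup>+u. indicator {\<omega>. u \<in> gw_tree \<omega> \<and> \<omega> u \<in> {r}} \<omega> \<partial>count_space UNIV)"
      proof (cases "\<omega> \<in> ?S")
        case False then show ?thesis by simp
      next
        case True
        then obtain u where u: "u \<in> gw_tree \<omega>" "\<omega> u = r" using M_attained r by blast
        have "indicator ?S \<omega> = (indicator {\<omega>. u \<in> gw_tree \<omega> \<and> \<omega> u \<in> {r}} \<omega> :: ennreal)"
          using True u by simp
        also have "\<dots> \<le> (\<integral>\<^sup>+u. indicator {\<omega>. u \<in> gw_tree \<omega> \<and> \<omega> u \<in> {r}} \<omega> \<partial>count_space UNIV)"
          by (rule nn_integral_ge_point) simp
        finally show ?thesis .
      qed
    qed
    also have "\<dots> = ennreal (pmf p r) * ennreal (1 / (1 - offspring_mean p))"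
      by (rule E_count[OF as])
    also have "\<dots> = ennreal (pmf p r / (1 - offspring_mean p))"
      using assms by (simp add: ennreal_mult'[symmetric] divide_inverse)
    finally show ?thesis unfolding measure_def using nn by (intro enn2real_leI)
  qed
next
  have as: "summable (\<lambda>k. real k * pmf p k)" "0 \<le> offspring_mean p" "offspring_mean p < 1"
    using assms by auto
  have "(\<integral>\<^sup>+ \<omega>. ennreal_of_enat (gw_M \<omega>) \<partial>gw_space p)
     \<le> (\<integral>\<^sup>+\<omega>. (\<integral>\<^sup>+u. indicator (gw_tree \<omega>) u * (of_nat (\<omega> u) :: ennreal) \<partial>count_space UNIV) \<partial>gw_space p)"
    by (rule nn_integral_mono) (rule M_le)
  also have "\<dots> = ennreal (offspring_mean p) * ennreal (1 / (1 - offspring_mean p))"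
    by (rule E_D[OF as])
  also have "\<dots> < \<infinity>" by (simp add: ennreal_mult_less_top)
  finally show "(\<integral>\<^sup>+ \<omega>. ennreal_of_enat (gw_M \<omega>) \<partial>gw_space p) < \<infinity>" .
qed

end
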